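(* Let $\gamma\in\mathbb{R}$ and $M>0$ be fixed, and for $0\le T\le S<\infty$, $w>0$ put $J_\gamma(T,S,w)=\int_T^S\frac{t^\gamma\,dt}{t^2+w^2}$. (a) If $\gamma>-1$, then $$J_\gamma(T,S,w)\simeq\frac{S-T}{S}\,\frac{S^{\gamma+1}}{(S\vee w)^2}\begin{cases}1,&\gamma>1,\\ 1+\log^+\frac{S}{T\vee w},&\gamma=1,\\ \left(\frac{T\vee w}{S\vee w}\right)^{\gamma-1},&\gamma\in(-1,1),\end{cases}$$ uniformly in $0\le T\le S<\infty$ and $0<w\le M$. (b) If $\gamma\le-1$, then $$J_\gamma(T,S,w)\simeq\frac{S-T}{S}\,\frac{T^{\gamma+1}}{(T\vee w)^2}\begin{cases}1+\log^+\frac{S\wedge w}{T},&\gamma=-1,\\ 1,&\gamma<-1,\end{cases}$$ uniformly in $0<T\le S<\infty$ and $0<w\le M$.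
   Context: $a\vee b=\max(a,b)$, $a\wedge b=\min(a,b)$, $\log^+x=\max(\log x,0)$. $X\simeq Y$ means $C^{-1}Y\le X\le CY$ with $C>0$ depending only on $\gamma$ and $M$. (When $T=S$ both sides are $0$; for $S=0$ in (a) the expression is understood as $0$.) *)

theory Defs
  imports "HOL-Analysis.Analysis"
begin

definition Jgam :: "real \<Rightarrow> real \<Rightarrow> real \<Rightarrow> real \<Rightarrow> real" where
  "Jgam \<gamma> T S w = integral {T..S} (\<lambda>t. t powr \<gamma> / (t\<^sup>2 + w\<^sup>2))"

definition logp :: "real \<Rightarrow> real" where
  "logp x = max (ln x) 0"

text \<open>Right-hand side of part (a); for S = 0 it evaluates to 0 since (S-T)/S = 0/0 = 0.\<close>
definition rhs_a :: "real \<Rightarrow> real \<Rightarrow> real \<Rightarrow> real \<Rightarrow> real" where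
  "rhs_a \<gamma> T S w = (S - T) / S * (S powr (\<gamma> + 1) / (max S w)\<^sup>2) *
     (if \<gamma> > 1 then 1
      else if \<gamma> = 1 then 1 + logp (S / max T w)
      else (max T w / max S w) powr (\<gamma> - 1))"

definition rhs_b :: "real \<Rightarrow> real \<Rightarrow> real \<Rightarrow> real \<Rightarrow> real" where
  "rhs_b \<gamma> T S w = (S - T) / S * (T powr (\<gamma> + 1) / (max T w)\<^sup>2) *
     (if \<gamma> = -1 then 1 + logp (min S w / T) else 1)"

end

theory Submission
  imports Defs
begin


lemma f_int_pos:
  fixes g w a b :: real assumes "0 < a" "0 < w"
  shows "(\<lambda>t. t powr g / (t\<^sup>2 + w\<^sup>2)) integrable_on {a..b}"
proof (rule integrable_continuous_interval)
  have "\<And>t. t\<^sup>2 + w\<^sup>2 > 0" using assms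
    by (intro add_nonneg_pos) auto
  then have "\<And>t. t\<^sup>2 + w\<^sup>2 \<noteq> 0" by (metis less_irrefl)
  then show "continuous_on {a..b} (\<lambda>t. t powr g / (t\<^sup>2 + w\<^sup>2))" using assms
    by (intro continuous_intros) auto
qed

lemma f_int_0:
  fixes g w b :: real assumes "g > -1" "0 < w"
  shows "(\<lambda>t. t powr g / (t\<^sup>2 + w\<^sup>2)) integrable_on {0..b}"
proof (cases "b \<ge> 0")
  case False then show ?thesis by (simp add: integrable_on_empty)
next
  case True
  have pi: "(\<lambda>t. t powr g) integrable_on {0..b}" by (rule integrable_on_powr_from_0) (use assms True in auto)
  have pa: "(\<lambda>t. t powr g) absolutely_integrable_on {0..b}"
    by (rule nonnegative_absolutely_integrable_1[OF pi]) auto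
  have co: "continuous_on {0..b} (\<lambda>t. 1 / (t\<^sup>2 + w\<^sup>2))" using assms
    by (intro continuous_intros) (auto simp: add_pos_nonneg)
  have meas: "(\<lambda>t. 1 / (t\<^sup>2 + w\<^sup>2)) \<in> borel_measurable (lebesgue_on {0..b})"
    by (rule continuous_imp_measurable_on_sets_lebesgue[OF co]) auto
  have bdd: "bounded ((\<lambda>t. 1 / (t\<^sup>2 + w\<^sup>2)) ` {0..b})"
    using compact_continuous_image[OF co] compact_imp_bounded by auto
  have "(\<lambda>t. 1 / (t\<^sup>2 + w\<^sup>2) * t powr g) absolutely_integrable_on {0..b}"
    by (rule absolutely_integrable_bounded_measurable_product_real[OF meas _ bdd pa]) simp
  then have "(\<lambda>t. 1 / (t\<^sup>2 + w\<^sup>2) * t powr g) integrable_on {0..b}"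
    by (rule set_lebesgue_integral_eq_integral(1))
  then show ?thesis by simp
qed

abbreviation fg :: "real \<Rightarrow> real \<Rightarrow> real \<Rightarrow> real" where
  "fg g w \<equiv> (\<lambda>t. t powr g / (t\<^sup>2 + w\<^sup>2))"

lemma J_def': "Jgam g T S w = integral {T..S} (fg g w)"
  by (simp add: Jgam_def)

lemma f_nonneg: "0 \<le> t \<Longrightarrow> 0 \<le> fg g w t"
  by simp

lemma J_nonneg: assumes "0 \<le> T" shows "0 \<le> Jgam g T S w"
proof (cases "fg g w integrable_on {T..S}")
  case True then show ?thesis unfolding J_def' 
    by (rule integral_nonneg) (use assms in auto)
next
  case False then show ?thesis unfolding J_def' by (simp add: not_integrable_integral)
qed

lemma J_mono: assumes "0 \<le> a" "a \<le> c" "c \<le> d" "d \<le> b" "fg g w integrable_on {a..b}"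
  shows "Jgam g c d w \<le> Jgam g a b w"
  unfolding J_def'
proof (rule integral_subset_le)
  show "{c..d} \<subseteq> {a..b}" using assms by auto
  show "fg g w integrable_on {c..d}" by (rule integrable_subinterval_real[OF assms(5)]) (use assms in auto)
qed (use assms in auto)

lemma J_add: assumes "a \<le> c" "c \<le> b" "fg g w integrable_on {a..b}"
  shows "Jgam g a b w = Jgam g a c w + Jgam g c b w"
  unfolding J_def' using Henstock_Kurzweil_Integration.integral_combine[OF assms] by simp

lemma pow_int: fixes a b p :: real assumes "0 < a" "a \<le> b" "p \<noteq> -1"
  shows "((\<lambda>t. t powr p) has_integral (b powr (p+1) - a powr (p+1))/(p+1)) {a..b}"
proof -
  have "((\<lambda>t. t powr p) has_integral ((\<lambda>x. x powr (p+1)/(p+1)) b - (\<lambda>x. x powr (p+1)/(p+1)) a)) {a..b}"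
  proof (rule fundamental_theorem_of_calculus[where f="\<lambda>x. x powr (p+1)/(p+1)"])
    fix x assume x: "x \<in> {a..b}"
    have "p + 1 \<noteq> 0" using assms by auto
    then show "((\<lambda>x. x powr (p+1)/(p+1)) has_vector_derivative x powr p) (at x within {a..b})"
      using x assms
      by (auto intro!: derivative_eq_intros simp flip: has_real_derivative_iff_has_vector_derivative)
  qed (use assms in auto)
  then show ?thesis by (simp add: diff_divide_distrib)
qed

lemma log_int: fixes a b :: real assumes "0 < a" "a \<le> b"
  shows "((\<lambda>t. t powr -1) has_integral (ln b - ln a)) {a..b}"
proof -
  have "((\<lambda>t. inverse t) has_integral (ln b - ln a)) {a..b}"
  proof (rule fundamental_theorem_of_calculus)
    fix x assume x: "x \<in> {a..b}"
    then show "(ln has_vector_derivative inverse x) (at x within {a..b})"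
      using x assms
      by (auto intro!: derivative_eq_intros simp: divide_inverse simp flip: has_real_derivative_iff_has_vector_derivative)
  qed (use assms in auto)
  then show ?thesis
    by (rule has_integral_eq[rotated]) (use assms in \<open>auto simp: powr_minus divide_inverse\<close>)
qed

lemma J_le: assumes "fg g w integrable_on {a..b}" "(h has_integral I) {a..b}"
  "\<And>t. t \<in> {a..b} \<Longrightarrow> fg g w t \<le> h t"
  shows "Jgam g a b w \<le> I"
  unfolding J_def' by (rule has_integral_le[OF integrable_integral[OF assms(1)] assms(2)]) (use assms in auto)

lemma J_ge: assumes "fg g w integrable_on {a..b}" "(h has_integral I) {a..b}"
  "\<And>t. t \<in> {a..b} \<Longrightarrow> h t \<le> fg g w t"
  shows "I \<le> Jgam g a b w"
  unfolding J_def' by (rule has_integral_le[OF assms(2) integrable_integral[OF assms(1)]]) (use assms in auto)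

lemma pw1: assumes "0 \<le> t" "0 < w" shows "fg g w t \<le> t powr g / w\<^sup>2"
  using assms by (intro divide_left_mono) (auto intro!: mult_pos_pos add_nonneg_pos)

lemma pw2: assumes "0 \<le> t" "0 < w" shows "fg g w t \<le> t powr (g - 2)"
proof (cases "t = 0")
  case True then show ?thesis by simp
next
  case False
  then have tp: "t > 0" using assms by auto
  have "fg g w t \<le> t powr g / t\<^sup>2"
    using assms tp by (intro divide_left_mono) (auto intro!: mult_pos_pos add_pos_nonneg)
  also have "\<dots> = t powr (g - 2)" using tp by (simp add: powr_diff powr_numeral)
  finally show ?thesis .
qed

lemma pw3: assumes "0 < t" "t \<le> w" shows "t powr g / (2 * w\<^sup>2) \<le> fg g w t"
proof -
  have "t\<^sup>2 \<le> w\<^sup>2" using assms by (intro power_mono) auto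
  then show ?thesis using assms by (intro divide_left_mono) (auto intro!: mult_pos_pos add_pos_nonneg)
qed

lemma pw4: assumes "0 < w" "w \<le> t" shows "t powr (g - 2) / 2 \<le> fg g w t"
proof -
  have tp: "t > 0" using assms by auto
  have "w\<^sup>2 \<le> t\<^sup>2" using assms by (intro power_mono) auto
  then have "t powr g / (2 * t\<^sup>2) \<le> fg g w t" using assms tp by (intro divide_left_mono) (auto intro!: mult_pos_pos add_pos_nonneg)
  moreover have "t powr g / (2 * t\<^sup>2) = t powr (g - 2) / 2" using tp by (simp add: powr_diff powr_numeral)
  ultimately show ?thesis by simp
qed

lemma RP: fixes x p :: real assumes "1/2 \<le> x" "x \<le> 1"
  shows "x powr p \<le> 2 powr \<bar>p\<bar>" "1 / 2 powr \<bar>p\<bar> \<le> x powr p"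
proof -
  have xp: "x > 0" using assms by auto
  have l1: "ln x \<le> 0" using assms by auto
  have l2: "- ln 2 \<le> ln x"
  proof -
    have "ln (1/2) \<le> ln x" using assms by (subst ln_le_cancel_iff) auto
    then show ?thesis by (simp add: ln_div)
  qed
  have "\<bar>ln x\<bar> \<le> ln 2" using l1 l2 by linarith
  then have "\<bar>p\<bar> * \<bar>ln x\<bar> \<le> \<bar>p\<bar> * ln 2" by (rule mult_left_mono) auto
  then have "\<bar>p * ln x\<bar> \<le> \<bar>p\<bar> * ln 2" by (simp add: abs_mult)
  then have b1: "p * ln x \<le> \<bar>p\<bar> * ln 2" and b2: "- (\<bar>p\<bar> * ln 2) \<le> p * ln x" by linarith+
  have "x powr p = exp (p * ln x)" using xp by (simp add: powr_def mult.commute)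
  moreover have "2 powr \<bar>p\<bar> = exp (\<bar>p\<bar> * ln 2)" by (simp add: powr_def mult.commute)
  ultimately show "x powr p \<le> 2 powr \<bar>p\<bar>" "1 / 2 powr \<bar>p\<bar> \<le> x powr p"
    using b1 b2 by (auto simp: exp_minus field_simps simp flip: exp_add)
qed

lemma HALF: fixes a b w g :: real
  assumes "0 < a" "a \<le> b" "b \<le> 2 * a" "0 < w"
  shows "(b - a) * (b powr g / (b\<^sup>2 + w\<^sup>2)) / 2 powr \<bar>g\<bar> \<le> Jgam g a b w"
    and "Jgam g a b w \<le> 4 * 2 powr \<bar>g\<bar> * ((b - a) * (b powr g / (b\<^sup>2 + w\<^sup>2)))"
proof -
  define K where "K = 2 powr \<bar>g\<bar>"
  define h where "h = b powr g / (b\<^sup>2 + w\<^sup>2)"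
  have Kp: "K > 0" unfolding K_def by simp
  have bp: "b > 0" using assms by auto
  have D: "b\<^sup>2 + w\<^sup>2 > 0" using assms by (simp add: add_pos_pos)
  have int: "fg g w integrable_on {a..b}" by (rule f_int_pos) (use assms in auto)
  have tb: "t powr g = (t/b) powr g * b powr g" if "t > 0" for t
    using that bp by (simp add: powr_divide)
  have lo: "h / K \<le> fg g w t" if t: "t \<in> {a..b}" for t
  proof -
    have tp: "t > 0" using t assms by auto
    have r: "1/K \<le> (t/b) powr g" unfolding K_def by (rule RP(2)) (use t assms bp in \<open>auto simp: field_simps\<close>)
    have "(1/K) * b powr g \<le> (t/b) powr g * b powr g" using r by (rule mult_right_mono) simp
    then have A: "b powr g / K \<le> t powr g" unfolding tb[OF tp] by simp
    have B: "t\<^sup>2 + w\<^sup>2 \<le> b\<^sup>2 + w\<^sup>2" using t tp by (simp add: power_mono)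
    have C: "t\<^sup>2 + w\<^sup>2 > 0" using assms by (simp add: add_nonneg_pos)
    have "(b powr g / K) / (b\<^sup>2 + w\<^sup>2) \<le> t powr g / (b\<^sup>2 + w\<^sup>2)"
      using A D by (intro divide_right_mono) auto
    also have "\<dots> \<le> t powr g / (t\<^sup>2 + w\<^sup>2)" using B C by (intro divide_left_mono) auto
    finally have "(b powr g / K) / (b\<^sup>2 + w\<^sup>2) \<le> t powr g / (t\<^sup>2 + w\<^sup>2)" .
    then show ?thesis unfolding h_def by (simp add: mult_ac)
  qed
  have up: "fg g w t \<le> 4 * K * h" if t: "t \<in> {a..b}" for t
  proof -
    have tp: "t > 0" using t assms by auto
    have r: "(t/b) powr g \<le> K" unfolding K_def by (rule RP(1)) (use t assms bp in \<open>auto simp: field_simps\<close>)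
    have "(t/b) powr g * b powr g \<le> K * b powr g" using r by (rule mult_right_mono) simp
    then have A: "t powr g \<le> K * b powr g" unfolding tb[OF tp] .
    have B: "(b\<^sup>2 + w\<^sup>2) / 4 \<le> t\<^sup>2 + w\<^sup>2"
    proof -
      have "b/2 \<le> t" using t assms by auto
      then have "(b/2)\<^sup>2 \<le> t\<^sup>2" using bp by (intro power_mono) auto
      then have "b\<^sup>2 \<le> t\<^sup>2 * 4" by (simp add: power_divide)
      then show ?thesis by (simp add: field_simps) (metis add_increasing zero_le_power2 mult_nonneg_nonneg zero_le_numeral)
    qed
    have C: "t\<^sup>2 + w\<^sup>2 > 0" using assms by (simp add: add_nonneg_pos)
    have "t powr g / (t\<^sup>2 + w\<^sup>2) \<le> (K * b powr g) / (t\<^sup>2 + w\<^sup>2)"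
      using A C by (intro divide_right_mono) auto
    also have "\<dots> \<le> (K * b powr g) / ((b\<^sup>2 + w\<^sup>2) / 4)"
    proof (rule divide_left_mono[OF B])
      show "0 \<le> K * b powr g" using Kp by simp
      show "0 < (t\<^sup>2 + w\<^sup>2) * ((b\<^sup>2 + w\<^sup>2) / 4)" using C D by simp
    qed
    also have "\<dots> = 4 * K * h" unfolding h_def using D by (simp add: field_simps)
    finally show ?thesis .
  qed
  have c1: "((\<lambda>t. h / K) has_integral (b - a) * (h / K)) {a..b}"
    using has_integral_const_real[of "h/K" a b] assms by simp
  have c2: "((\<lambda>t. 4 * K * h) has_integral (b - a) * (4 * K * h)) {a..b}"
    using has_integral_const_real[of "4*K*h" a b] assms by simp
  show "(b - a) * (b powr g / (b\<^sup>2 + w\<^sup>2)) / 2 powr \<bar>g\<bar> \<le> Jgam g a b w"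
    using J_ge[OF int c1 lo] unfolding h_def K_def by simp
  show "Jgam g a b w \<le> 4 * 2 powr \<bar>g\<bar> * ((b - a) * (b powr g / (b\<^sup>2 + w\<^sup>2)))"
    using J_le[OF int c2 up] unfolding h_def K_def by (simp add: mult_ac)
qed

lemma f_int: assumes "0 \<le> T" "0 < w" "0 < T \<or> g > -1"
  shows "fg g w integrable_on {T..S}"
proof (cases "T > 0")
  case True then show ?thesis using f_int_pos assms by blast
next
  case False
  then have "T = 0" "g > -1" using assms by auto
  then show ?thesis using f_int_0 assms by blast
qed

lemma UB1: assumes "g > -1" "0 < w" "0 \<le> T" "T \<le> S"
  shows "Jgam g T S w \<le> S powr (g+1) / (g+1) / w\<^sup>2"
proof -
  have "Jgam g T S w \<le> Jgam g 0 S w"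
    by (rule J_mono) (use assms f_int[of 0 w g S] in auto)
  also have "\<dots> \<le> S powr (g+1) / (g+1) / w\<^sup>2"
  proof (rule J_le)
    show "fg g w integrable_on {0..S}" using f_int[of 0 w g S] assms by auto
    show "((\<lambda>t. t powr g / w\<^sup>2) has_integral S powr (g+1) / (g+1) / w\<^sup>2) {0..S}"
      by (rule has_integral_divide[OF has_integral_powr_from_0]) (use assms in auto)
    show "fg g w t \<le> t powr g / w\<^sup>2" if "t \<in> {0..S}" for t using pw1 that assms by auto
  qed
  finally show ?thesis .
qed

lemma UB2: assumes "g > 1" "0 < w" "0 \<le> T" "T \<le> S"
  shows "Jgam g T S w \<le> S powr (g-1) / (g-1)"
proof -
  have "Jgam g T S w \<le> Jgam g 0 S w"
    by (rule J_mono) (use assms f_int[of 0 w g S] in auto)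
  also have "\<dots> \<le> S powr (g-2+1) / (g-2+1)"
  proof (rule J_le)
    show "fg g w integrable_on {0..S}" using f_int[of 0 w g S] assms by auto
    show "((\<lambda>t. t powr (g-2)) has_integral S powr (g-2+1) / (g-2+1)) {0..S}"
      by (rule has_integral_powr_from_0) (use assms in auto)
    show "fg g w t \<le> t powr (g-2)" if "t \<in> {0..S}" for t using pw2 that assms by auto
  qed
  finally show ?thesis by simp
qed

lemma UB3: assumes "g \<noteq> -1" "0 < w" "0 < T" "T \<le> S"
  shows "Jgam g T S w \<le> (S powr (g+1) - T powr (g+1)) / (g+1) / w\<^sup>2"
proof (rule J_le)
  show "fg g w integrable_on {T..S}" using f_int_pos assms by auto
  show "((\<lambda>t. t powr g / w\<^sup>2) has_integral (S powr (g+1) - T powr (g+1)) / (g+1) / w\<^sup>2) {T..S}"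
    by (rule has_integral_divide[OF pow_int]) (use assms in auto)
  show "fg g w t \<le> t powr g / w\<^sup>2" if "t \<in> {T..S}" for t by (rule pw1) (use that assms in auto)
qed

lemma UB4: assumes "g \<noteq> 1" "0 < w" "0 < T" "T \<le> S"
  shows "Jgam g T S w \<le> (S powr (g-1) - T powr (g-1)) / (g-1)"
proof -
  have "Jgam g T S w \<le> (S powr (g-2+1) - T powr (g-2+1)) / (g-2+1)"
  proof (rule J_le)
    show "fg g w integrable_on {T..S}" using f_int_pos assms by auto
    show "((\<lambda>t. t powr (g-2)) has_integral (S powr (g-2+1) - T powr (g-2+1)) / (g-2+1)) {T..S}"
      by (rule pow_int) (use assms in auto)
    show "fg g w t \<le> t powr (g-2)" if "t \<in> {T..S}" for t using pw2 that assms by auto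
  qed
  then show ?thesis by simp
qed

lemma UB5a: assumes "0 < w" "0 < T" "T \<le> S"
  shows "Jgam (-1) T S w \<le> (ln S - ln T) / w\<^sup>2"
proof (rule J_le)
  show "fg (-1) w integrable_on {T..S}" by (rule f_int_pos) (use assms in auto)
  show "((\<lambda>t. t powr -1 / w\<^sup>2) has_integral (ln S - ln T) / w\<^sup>2) {T..S}"
    by (rule has_integral_divide[OF log_int]) (use assms in auto)
  show "fg (-1) w t \<le> t powr -1 / w\<^sup>2" if "t \<in> {T..S}" for t by (rule pw1) (use that assms in auto)
qed

lemma UB5b: assumes "0 < w" "0 < T" "T \<le> S"
  shows "Jgam 1 T S w \<le> ln S - ln T"
proof (rule J_le)
  show "fg 1 w integrable_on {T..S}" by (rule f_int_pos) (use assms in auto)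
  show "((\<lambda>t. t powr -1) has_integral (ln S - ln T)) {T..S}"
    by (rule log_int) (use assms in auto)
  show "fg 1 w t \<le> t powr -1" if "t \<in> {T..S}" for t using pw2[of t w 1] that assms by simp
qed

lemma LB3: assumes "0 < T" "T \<le> S" "S \<le> w"
  shows "(ln S - ln T) / (2 * w\<^sup>2) \<le> Jgam (-1) T S w"
proof (rule J_ge)
  show "fg (-1) w integrable_on {T..S}" by (rule f_int_pos) (use assms in auto)
  show "((\<lambda>t. t powr -1 / (2 * w\<^sup>2)) has_integral (ln S - ln T) / (2 * w\<^sup>2)) {T..S}"
    by (rule has_integral_divide[OF log_int]) (use assms in auto)
  show "t powr -1 / (2 * w\<^sup>2) \<le> fg (-1) w t" if "t \<in> {T..S}" for t by (rule pw3) (use that assms in auto)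
qed

lemma LB4: assumes "0 < w" "w \<le> T" "T \<le> S"
  shows "(ln S - ln T) / 2 \<le> Jgam 1 T S w"
proof (rule J_ge)
  show "fg 1 w integrable_on {T..S}" by (rule f_int_pos) (use assms in auto)
  show "((\<lambda>t. t powr -1 / 2) has_integral (ln S - ln T) / 2) {T..S}"
    by (rule has_integral_divide[OF log_int]) (use assms in auto)
  show "t powr -1 / 2 \<le> fg 1 w t" if "t \<in> {T..S}" for t using pw4[of w t 1] that assms by simp
qed

lemma MX: fixes S w :: real assumes "0 \<le> S" "0 < w"
  shows "(max S w)\<^sup>2 \<le> S\<^sup>2 + w\<^sup>2" "S\<^sup>2 + w\<^sup>2 \<le> 2 * (max S w)\<^sup>2" "0 < max S w"
proof -
  show "(max S w)\<^sup>2 \<le> S\<^sup>2 + w\<^sup>2"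
  proof (cases "S \<le> w")
    case True then have "max S w = w" by simp
    then show ?thesis by simp
  next
    case False then have "max S w = S" by simp
    then show ?thesis by simp
  qed
  have "S\<^sup>2 \<le> (max S w)\<^sup>2" "w\<^sup>2 \<le> (max S w)\<^sup>2" using assms by (auto intro!: power_mono)
  then show "S\<^sup>2 + w\<^sup>2 \<le> 2 * (max S w)\<^sup>2" by simp
  show "0 < max S w" using assms by simp
qed

lemma powr_p1: "0 < (S::real) \<Longrightarrow> S powr (g+1) = S powr g * S"
  by (simp add: powr_add)

lemma L0: fixes S T w g :: real
  assumes "0 < S" "0 < w" "0 \<le> T" "T \<le> S/2" "0 < T \<or> g > -1"
  shows "S powr (g+1) / (4 * 2 powr \<bar>g\<bar> * (max S w)\<^sup>2) \<le> Jgam g T S w"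
proof -
  define K where "K = 2 powr \<bar>g\<bar>"
  define m where "m = max S w"
  have Kp: "K > 0" unfolding K_def by simp
  have mp: "m > 0" and m2: "S\<^sup>2 + w\<^sup>2 \<le> 2 * m\<^sup>2" using MX[of S w] assms unfolding m_def by auto
  have D: "S\<^sup>2 + w\<^sup>2 > 0" using assms by (simp add: add_pos_pos)
  have h1: "(S - S/2) * (S powr g / (S\<^sup>2 + w\<^sup>2)) / K \<le> Jgam g (S/2) S w"
    unfolding K_def by (rule HALF(1)) (use assms in auto)
  have h2: "Jgam g (S/2) S w \<le> Jgam g T S w"
    by (rule J_mono) (use assms f_int[of T w g S] in auto)
  have e1: "(S - S/2) * (S powr g / (S\<^sup>2 + w\<^sup>2)) / K = (S powr g * S) / (2 * K * (S\<^sup>2 + w\<^sup>2))"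
    using Kp D by (simp add: field_simps)
  have "(S powr g * S) / (4 * K * m\<^sup>2) \<le> (S powr g * S) / (2 * K * (S\<^sup>2 + w\<^sup>2))"
  proof (rule divide_left_mono)
    show "2 * K * (S\<^sup>2 + w\<^sup>2) \<le> 4 * K * m\<^sup>2" using m2 Kp by simp
    show "0 \<le> S powr g * S" using assms by simp
    show "0 < 4 * K * m\<^sup>2 * (2 * K * (S\<^sup>2 + w\<^sup>2))" using Kp mp D by simp
  qed
  then have "S powr (g+1) / (4 * K * m\<^sup>2) \<le> (S - S/2) * (S powr g / (S\<^sup>2 + w\<^sup>2)) / K"
    using e1 powr_p1[OF assms(1)] by simp
  then show ?thesis using h1 h2 unfolding K_def m_def by linarith
qed

lemma two_powr_ge: "1 / 2 powr \<bar>g\<bar> \<le> 2 powr (g::real)"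
proof -
  have "2 powr (- \<bar>g\<bar>) \<le> 2 powr g" by (rule powr_mono) auto
  then show ?thesis by (simp add: powr_minus divide_inverse)
qed

lemma L1: fixes S T w g :: real
  assumes "0 < w" "0 < T" "2 * T \<le> S"
  shows "T powr (g+1) / (5 * (2 powr \<bar>g\<bar>)\<^sup>2 * (max T w)\<^sup>2) \<le> Jgam g T S w"
proof -
  define K where "K = 2 powr \<bar>g\<bar>"
  define m where "m = max T w"
  have Kp: "K > 0" unfolding K_def by simp
  have mp: "m > 0" using assms unfolding m_def by auto
  have h1: "(2*T - T) * ((2*T) powr g / ((2*T)\<^sup>2 + w\<^sup>2)) / K \<le> Jgam g T (2*T) w"
    unfolding K_def by (rule HALF(1)) (use assms in auto)
  have h2: "Jgam g T (2*T) w \<le> Jgam g T S w"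
    by (rule J_mono) (use assms f_int[of T w g S] in auto)
  have A: "T powr g / K \<le> (2*T) powr g"
  proof -
    have "T powr g * (1/K) \<le> T powr g * 2 powr g"
      using two_powr_ge[of g] unfolding K_def by (intro mult_left_mono) auto
    then show ?thesis using assms by (simp add: powr_mult mult.commute)
  qed
  have B: "(2*T)\<^sup>2 + w\<^sup>2 \<le> 5 * m\<^sup>2"
  proof -
    have "T\<^sup>2 \<le> m\<^sup>2" "w\<^sup>2 \<le> m\<^sup>2" unfolding m_def using assms by (auto intro!: power_mono)
    then show ?thesis by (simp add: power_mult_distrib)
  qed
  have D: "(2*T)\<^sup>2 + w\<^sup>2 > 0" using assms by (simp add: add_pos_pos)
  have "T powr (g+1) / (5 * K\<^sup>2 * m\<^sup>2) = T * (T powr g / K) / (5 * m\<^sup>2 * K)"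
    unfolding powr_p1[OF assms(2)] using Kp mp by (simp add: field_simps power2_eq_square)
  also have "\<dots> \<le> T * ((2*T) powr g) / (5 * m\<^sup>2 * K)"
    using A assms Kp mp by (intro divide_right_mono mult_left_mono) auto
  also have "\<dots> \<le> T * ((2*T) powr g) / (((2*T)\<^sup>2 + w\<^sup>2) * K)"
  proof (rule divide_left_mono)
    show "((2*T)\<^sup>2 + w\<^sup>2) * K \<le> 5 * m\<^sup>2 * K" using B Kp by simp
    show "0 \<le> T * ((2*T) powr g)" using assms by simp
    show "0 < 5 * m\<^sup>2 * K * (((2*T)\<^sup>2 + w\<^sup>2) * K)" using Kp mp D by simp
  qed
  also have "\<dots> = (2*T - T) * ((2*T) powr g / ((2*T)\<^sup>2 + w\<^sup>2)) / K" by simp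
  finally show ?thesis using h1 h2 unfolding K_def m_def by linarith
qed

lemma sandwich: fixes H J R X K A :: real
  assumes "0 \<le> H" "H/K \<le> J" "J \<le> 4*K*H" "R = H*X" "1/A \<le> X" "X \<le> A" "0<K" "0<A"
  shows "R/(4*K*A) \<le> J \<and> J \<le> 4*K*A*R"
proof
  have "R \<le> H*A" using assms by (simp add: mult_left_mono)
  then have "R/(4*K*A) \<le> H*A/(4*K*A)" using assms by (intro divide_right_mono) auto
  also have "\<dots> = H/(4*K)" using assms by simp
  also have "\<dots> \<le> H/K" using assms by (simp add: divide_left_mono)
  finally show "R/(4*K*A) \<le> J" using assms by linarith
  have "1 \<le> A*X" using assms by (simp add: divide_le_eq mult.commute)
  then have "H*1 \<le> H*(A*X)" using assms by (intro mult_left_mono) auto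
  then have "H \<le> A*R" using assms by (simp add: mult_ac)
  then have "4*K*H \<le> 4*K*(A*R)" using assms by (intro mult_left_mono) auto
  then show "J \<le> 4*K*A*R" using assms by (simp add: mult_ac)
qed

lemma small_conv: fixes S T Q J R c C :: real
  assumes "0 < S" "0 \<le> T" "T \<le> S/2" "0 \<le> Q" "Q/c \<le> J" "J \<le> C*Q" "0<c" "0<C"
    "R = (S-T)/S*Q"
  shows "R/c \<le> J \<and> J \<le> 2*C*R"
proof
  have f1: "(S-T)/S \<le> 1" "1/2 \<le> (S-T)/S" using assms by (auto simp: field_simps)
  have "R \<le> 1*Q" unfolding assms(9) using f1 assms by (intro mult_right_mono) auto
  then have "R/c \<le> Q/c" using assms by (intro divide_right_mono) auto
  then show "R/c \<le> J" using assms by linarith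
  have "1/2*Q \<le> R" unfolding assms(9) using f1 assms by (intro mult_right_mono) auto
  then have "Q \<le> 2*R" by linarith
  then have "C*Q \<le> C*(2*R)" using assms(8) by (intro mult_left_mono) auto
  then have "C*Q \<le> 2*C*R" by (simp add: mult_ac)
  then show "J \<le> 2*C*R" using assms(6) by linarith
qed

lemma weaken: fixes R J C C' :: real
  assumes "0 \<le> R" "0 < C" "C \<le> C'" "R/C \<le> J \<and> J \<le> C*R"
  shows "R/C' \<le> J \<and> J \<le> C'*R"
proof
  have "R/C' \<le> R/C" using assms by (intro divide_left_mono) auto
  then show "R/C' \<le> J" using assms by linarith
  have "C*R \<le> C'*R" using assms by (intro mult_right_mono) auto
  then show "J \<le> C'*R" using assms by linarith
qed

lemma prod2: fixes a b la lb ua ub :: real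
  assumes "0 \<le> la" "la \<le> a" "a \<le> ua" "0 \<le> lb" "lb \<le> b" "b \<le> ub"
  shows "la*lb \<le> a*b" "a*b \<le> ua*ub"
  using assms by (auto intro!: mult_mono order.trans[OF assms(1) assms(2)] order.trans[OF assms(4) assms(5)])

lemma logp_bounds: fixes x :: real assumes "0 < x" "x \<le> 2"
  shows "0 \<le> logp x" "logp x \<le> 1"
proof -
  show "0 \<le> logp x" unfolding logp_def by simp
  have "ln x \<le> ln 2" using assms by simp
  then show "logp x \<le> 1" unfolding logp_def using ln_2_less_1 by simp
qed

lemma BIG_a: fixes g S T w :: real
  assumes "0 < S" "S/2 \<le> T" "T \<le> S" "0 < w"
  shows "rhs_a g T S w / (4 * 2 powr \<bar>g\<bar> * (2 * (2 + 2 powr \<bar>g - 1\<bar>))) \<le> Jgam g T S w \<and>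
         Jgam g T S w \<le> 4 * 2 powr \<bar>g\<bar> * (2 * (2 + 2 powr \<bar>g - 1\<bar>)) * rhs_a g T S w"
proof -
  define K where "K = 2 powr \<bar>g\<bar>"
  define F0 where "F0 = 2 + 2 powr \<bar>g - 1\<bar>"
  define m where "m = max S w"
  define F where "F = (if g > 1 then 1 else if g = 1 then 1 + logp (S / max T w)
      else (max T w / max S w) powr (g - 1))"
  define H where "H = (S - T) * (S powr g / (S\<^sup>2 + w\<^sup>2))"
  define X where "X = (S\<^sup>2 + w\<^sup>2) / m\<^sup>2 * F"
  have Kp: "K > 0" unfolding K_def by simp
  have F0: "F0 \<ge> 2" unfolding F0_def by simp
  have mp: "m > 0" and m1: "m\<^sup>2 \<le> S\<^sup>2 + w\<^sup>2" and m2: "S\<^sup>2 + w\<^sup>2 \<le> 2 * m\<^sup>2"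
    using MX[of S w] assms unfolding m_def by auto
  have r1: "1 \<le> (S\<^sup>2 + w\<^sup>2) / m\<^sup>2" using m1 mp by (simp add: le_divide_eq)
  have r2: "(S\<^sup>2 + w\<^sup>2) / m\<^sup>2 \<le> 2" using m2 mp by (simp add: divide_le_eq)
  have Fb: "1/F0 \<le> F \<and> F \<le> F0"
  proof (cases "g > 1")
    case True then show ?thesis unfolding F_def using F0 by (simp add: divide_le_eq)
  next
    case False
    show ?thesis
    proof (cases "g = 1")
      case True
      have "0 < S / max T w" "S / max T w \<le> 2" using assms by (auto simp: divide_le_eq)
      then have "0 \<le> logp (S / max T w)" "logp (S / max T w) \<le> 1" using logp_bounds by auto
      moreover have "F = 1 + logp (S / max T w)" unfolding F_def using False True by simp
      moreover have "1/F0 \<le> 1" using F0 by simp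
      ultimately show ?thesis using F0 by linarith
    next
      case False2: False
      have x1: "1/2 \<le> max T w / max S w" using assms by (auto simp: field_simps max_def)
      have x2: "max T w / max S w \<le> 1" using assms by (auto simp: field_simps max_def)
      have "F = (max T w / max S w) powr (g - 1)" unfolding F_def using False False2 by simp
      moreover have "(max T w / max S w) powr (g - 1) \<le> 2 powr \<bar>g - 1\<bar>" by (rule RP(1)[OF x1 x2])
      moreover have "1 / 2 powr \<bar>g - 1\<bar> \<le> (max T w / max S w) powr (g - 1)" by (rule RP(2)[OF x1 x2])
      moreover have "1/F0 \<le> 1 / 2 powr \<bar>g - 1\<bar>" unfolding F0_def by (intro divide_left_mono) (auto intro!: mult_pos_pos add_pos_pos)
      ultimately show ?thesis unfolding F0_def by auto
    qed
  qed
  have Xl: "1/(2*F0) \<le> X"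
  proof -
    have "1 * (1/F0) \<le> (S\<^sup>2 + w\<^sup>2) / m\<^sup>2 * F" by (rule mult_mono) (use r1 Fb F0 in auto)
    moreover have "1/(2*F0) \<le> 1/F0" using F0 by (simp add: divide_le_eq)
    ultimately show ?thesis unfolding X_def by simp
  qed
  have Xu: "X \<le> 2*F0"
  proof -
    have "0 \<le> 1/F0" using F0 by simp
    then have "0 \<le> F" using Fb by linarith
    then have "(S\<^sup>2 + w\<^sup>2) / m\<^sup>2 * F \<le> 2 * F0" by (intro mult_mono) (use r2 Fb F0 in auto)
    then show ?thesis unfolding X_def .
  qed
  have D: "S\<^sup>2 + w\<^sup>2 > 0" using assms by (simp add: add_pos_pos)
  have R0: "rhs_a g T S w = (S-T)/S * (S powr (g+1)/m\<^sup>2) * F"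
    unfolding rhs_a_def F_def m_def by simp
  have Dn: "S\<^sup>2 + w\<^sup>2 \<noteq> 0" using D by linarith
  have e1: "H * X = (S-T) * S powr g * F / m\<^sup>2" unfolding H_def X_def using Dn by simp
  have e2: "(S-T)/S * (S powr (g+1)/m\<^sup>2) * F = (S-T) * S powr g * F / m\<^sup>2"
    unfolding powr_p1[OF assms(1)] using assms by simp
  have R: "rhs_a g T S w = H * X" using R0 e1 e2 by simp
  have hp: "0 \<le> H" unfolding H_def using assms by simp
  have HALF1: "H / K \<le> Jgam g T S w" unfolding H_def K_def by (rule HALF(1)) (use assms in auto)
  have HALF2: "Jgam g T S w \<le> 4 * K * H" unfolding H_def K_def by (rule HALF(2)) (use assms in auto)
  have "rhs_a g T S w / (4 * K * (2 * F0)) \<le> Jgam g T S w \<and> Jgam g T S w \<le> 4 * K * (2 * F0) * rhs_a g T S w"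
    by (rule sandwich[OF hp HALF1 HALF2 R _ Xu Kp]) (use Xl F0 in auto)
  then show ?thesis unfolding K_def F0_def .
qed

lemma BIG_b: fixes g S T w :: real
  assumes "0 < S" "S/2 \<le> T" "T \<le> S" "0 < w"
  shows "rhs_b g T S w / (4 * 2 powr \<bar>g\<bar> * (16 * 2 powr \<bar>g + 1\<bar>)) \<le> Jgam g T S w \<and>
         Jgam g T S w \<le> 4 * 2 powr \<bar>g\<bar> * (16 * 2 powr \<bar>g + 1\<bar>) * rhs_b g T S w"
proof -
  define K where "K = 2 powr \<bar>g\<bar>"
  define K1 where "K1 = 2 powr \<bar>g + 1\<bar>"
  define m where "m = max S w"
  define mt where "mt = max T w"
  define F where "F = (if g = -1 then 1 + logp (min S w / T) else 1)"
  define H where "H = (S - T) * (S powr g / (S\<^sup>2 + w\<^sup>2))"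
  define X where "X = (S\<^sup>2 + w\<^sup>2) / mt\<^sup>2 * ((T/S) powr (g+1) * F)"
  have Kp: "K > 0" unfolding K_def by simp
  have K1p: "K1 \<ge> 1" unfolding K1_def by (rule ge_one_powr_ge_zero) auto
  have Tp: "T > 0" using assms by auto
  have mp: "m > 0" and m1: "m\<^sup>2 \<le> S\<^sup>2 + w\<^sup>2" and m2: "S\<^sup>2 + w\<^sup>2 \<le> 2 * m\<^sup>2"
    using MX[of S w] assms unfolding m_def by auto
  have mtp: "mt > 0" unfolding mt_def using assms by auto
  have mm1: "mt \<le> m" unfolding mt_def m_def using assms by auto
  have mm2: "m \<le> 2 * mt" unfolding mt_def m_def using assms by (auto simp: max_def)
  have q1: "mt\<^sup>2 \<le> m\<^sup>2" using mm1 mtp by (intro power_mono) auto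
  have q2: "m\<^sup>2 \<le> (2*mt)\<^sup>2" using mm2 mp by (intro power_mono) auto
  have a1: "1 \<le> (S\<^sup>2 + w\<^sup>2) / mt\<^sup>2" using m1 q1 mtp by (simp add: le_divide_eq)
  have a2: "(S\<^sup>2 + w\<^sup>2) / mt\<^sup>2 \<le> 8" using m2 q2 mtp by (simp add: divide_le_eq power_mult_distrib)
  have x1: "1/2 \<le> T/S" "T/S \<le> 1" using assms by (auto simp: field_simps)
  have b1: "1/K1 \<le> (T/S) powr (g+1)" unfolding K1_def by (rule RP(2)[OF x1])
  have b2: "(T/S) powr (g+1) \<le> K1" unfolding K1_def by (rule RP(1)[OF x1])
  have Fb: "1 \<le> F \<and> F \<le> 2"
  proof (cases "g = -1")
    case True
    have "0 < min S w / T" "min S w / T \<le> 2" using assms Tp by (auto simp: divide_le_eq)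
    then have "0 \<le> logp (min S w / T)" "logp (min S w / T) \<le> 1" using logp_bounds by auto
    then show ?thesis unfolding F_def using True by simp
  next
    case False then show ?thesis unfolding F_def by simp
  qed
  have bc1: "(1/K1) * 1 \<le> (T/S) powr (g+1) * F" by (rule mult_mono) (use b1 Fb in auto)
  have bc2: "(T/S) powr (g+1) * F \<le> K1 * 2" by (rule mult_mono) (use b2 Fb K1p in auto)
  have Xl0: "1 * ((1/K1) * 1) \<le> X" unfolding X_def by (rule mult_mono) (use a1 bc1 K1p in auto)
  have Xu: "X \<le> 16 * K1"
  proof -
    have nn: "0 \<le> (T/S) powr (g+1) * F" using Fb by simp
    have "(S\<^sup>2 + w\<^sup>2) / mt\<^sup>2 * ((T/S) powr (g+1) * F) \<le> 8 * (K1 * 2)"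
      by (rule mult_mono) (use a2 bc2 nn in auto)
    then show ?thesis unfolding X_def by simp
  qed
  have Xl: "1/(16*K1) \<le> X"
  proof -
    have "1/(16*K1) \<le> 1/K1" using K1p by (simp add: divide_le_eq)
    then show ?thesis using Xl0 by simp
  qed
  have D: "S\<^sup>2 + w\<^sup>2 > 0" using assms by (simp add: add_pos_pos)
  have Dn: "S\<^sup>2 + w\<^sup>2 \<noteq> 0" using D by linarith
  have R0: "rhs_b g T S w = (S-T)/S * (T powr (g+1)/mt\<^sup>2) * F"
    unfolding rhs_b_def F_def mt_def by simp
  have tt: "T powr (g+1) = (T/S) powr (g+1) * S powr g * S"
    unfolding powr_divide powr_p1[OF assms(1)] using assms by simp
  have e1: "H * X = (S-T) * S powr g * ((T/S) powr (g+1) * F) / mt\<^sup>2" unfolding H_def X_def using Dn by simp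
  have e2: "(S-T)/S * (T powr (g+1)/mt\<^sup>2) * F = (S-T) * S powr g * ((T/S) powr (g+1) * F) / mt\<^sup>2"
    unfolding tt using assms by simp
  have R: "rhs_b g T S w = H * X" using R0 e1 e2 by simp
  have hp: "0 \<le> H" unfolding H_def using assms by simp
  have HALF1: "H / K \<le> Jgam g T S w" unfolding H_def K_def by (rule HALF(1)) (use assms in auto)
  have HALF2: "Jgam g T S w \<le> 4 * K * H" unfolding H_def K_def by (rule HALF(2)) (use assms in auto)
  have "rhs_b g T S w / (4 * K * (16 * K1)) \<le> Jgam g T S w \<and> Jgam g T S w \<le> 4 * K * (16 * K1) * rhs_b g T S w"
    by (rule sandwich[OF hp HALF1 HALF2 R Xl Xu Kp]) (use K1p in auto)
  then show ?thesis unfolding K_def K1_def .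
qed

lemma pq1: "0 < (S::real) \<Longrightarrow> S powr (g+1) / S\<^sup>2 = S powr (g-1)"
proof -
  assume S: "0 < S"
  have "S powr (g+1) = S powr ((g-1) + 2)" by (rule arg_cong[of _ _ "\<lambda>x. S powr x"]) simp
  also have "\<dots> = S powr (g-1) * S powr 2" by (rule powr_add)
  also have "S powr 2 = S\<^sup>2" using S by (simp add: powr_numeral)
  finally have "S powr (g+1) = S powr (g-1) * S\<^sup>2" .
  then show ?thesis using S by simp
qed

lemma K_ge1: "1 \<le> 2 powr \<bar>g::real\<bar>" by (rule ge_one_powr_ge_zero) auto

lemma SMALL_a1: fixes g S T w :: real
  assumes "g > 1" "0 < S" "0 \<le> T" "T \<le> S/2" "0 < w"
  shows "S powr (g+1) / (max S w)\<^sup>2 / (4 * 2 powr \<bar>g\<bar>) \<le> Jgam g T S w \<and>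
    Jgam g T S w \<le> (1/(g+1) + 1/(g-1)) * (S powr (g+1) / (max S w)\<^sup>2)"
proof
  show "S powr (g+1) / (max S w)\<^sup>2 / (4 * 2 powr \<bar>g\<bar>) \<le> Jgam g T S w"
    using L0[of S w T g] assms by (simp add: divide_divide_eq_left mult_ac)
  define Q where "Q = S powr (g+1) / (max S w)\<^sup>2"
  have Qp: "0 \<le> Q" unfolding Q_def by simp
  have c1: "1/(g+1) * Q \<le> (1/(g+1) + 1/(g-1)) * Q" using assms Qp by (intro mult_right_mono) auto
  have c2: "1/(g-1) * Q \<le> (1/(g+1) + 1/(g-1)) * Q" using assms Qp by (intro mult_right_mono) auto
  have "Jgam g T S w \<le> (1/(g+1) + 1/(g-1)) * Q"
  proof (cases "S \<le> w")
    case True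
    then have "Q = S powr (g+1) / w\<^sup>2" unfolding Q_def by simp
    then have "Jgam g T S w \<le> 1/(g+1) * Q" using UB1[of g w T S] assms by simp
    then show ?thesis using c1 by linarith
  next
    case False
    then have "Q = S powr (g-1)" unfolding Q_def using pq1 assms by simp
    then have "Jgam g T S w \<le> 1/(g-1) * Q" using UB2[of g w T S] assms by simp
    then show ?thesis using c2 by linarith
  qed
  then show "Jgam g T S w \<le> (1/(g+1) + 1/(g-1)) * (S powr (g+1) / (max S w)\<^sup>2)"
    unfolding Q_def .
qed

lemma J_refl: "Jgam g T T w = 0" unfolding Jgam_def by simp

lemma SMALL_a2: fixes g S T w :: real
  assumes "g = 1" "0 < S" "0 \<le> T" "T \<le> S/2" "0 < w"
  shows "S powr (g+1) / (max S w)\<^sup>2 * (1 + logp (S / max T w)) / (8 * 2 powr \<bar>g\<bar>) \<le> Jgam g T S w \<and>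
    Jgam g T S w \<le> 1 * (S powr (g+1) / (max S w)\<^sup>2 * (1 + logp (S / max T w)))"
proof -
  define K where "K = 2 powr \<bar>g\<bar>"
  define Q where "Q = S powr (g+1) / (max S w)\<^sup>2 * (1 + logp (S / max T w))"
  have K1: "1 \<le> K" unfolding K_def by (rule K_ge1)
  have L0': "S powr (g+1) / (4 * K * (max S w)\<^sup>2) \<le> Jgam g T S w"
    unfolding K_def by (rule L0) (use assms in auto)
  have "Q / (8*K) \<le> Jgam g T S w \<and> Jgam g T S w \<le> Q"
  proof (cases "S \<le> w")
    case True
    have mx: "max T w = w" "max S w = w" using True assms by auto
    have "ln (S / w) \<le> 0" using True assms by simp
    then have lp: "logp (S / w) = 0" unfolding logp_def by simp
    have Q: "Q = S powr (g+1) / w\<^sup>2" unfolding Q_def mx lp by simp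
    have "Q / (8*K) \<le> Q / (4*K)" unfolding Q using K1 by (intro divide_left_mono) auto
    also have "Q / (4*K) = S powr (g+1) / (4 * K * (max S w)\<^sup>2)" unfolding Q mx by simp
    finally have lo: "Q / (8*K) \<le> Jgam g T S w" using L0' by linarith
    have "Jgam g T S w \<le> S powr (g+1) / (g+1) / w\<^sup>2" by (rule UB1) (use assms True in auto)
    also have "\<dots> \<le> Q" unfolding Q using assms by (simp add: divide_le_eq)
    finally show ?thesis using lo by simp
  next
    case False
    define u where "u = max T w"
    define L where "L = ln S - ln u"
    have up: "0 < u" "w \<le> u" "u \<le> S" "T \<le> u" using False assms unfolding u_def by auto
    have mS: "max S w = S" using False by simp
    have Lnn: "0 \<le> L" unfolding L_def using up by simp
    have lnSu: "ln (S/u) = L" unfolding L_def using up assms by (simp add: ln_div)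
    have lp: "logp (S / max T w) = L" unfolding logp_def u_def[symmetric] lnSu using Lnn by simp
    have S2: "S powr (g+1) = S\<^sup>2"
    proof -
      have "S powr (g+1) / S\<^sup>2 = 1" using pq1[OF assms(2), of g] assms by simp
      then show ?thesis using assms by (simp add: divide_eq_1_iff)
    qed
    have Q: "Q = 1 + L" unfolding Q_def lp mS S2 using assms by simp
    have int: "fg g w integrable_on {T..S}" by (rule f_int) (use assms in auto)
    have split: "Jgam g T S w = Jgam g T u w + Jgam g u S w" by (rule J_add) (use up int in auto)
    have j2: "Jgam g u S w \<le> L" unfolding L_def assms(1) by (rule UB5b) (use up assms in auto)
    have j1: "Jgam g T u w \<le> 1/2"
    proof (cases "T < w")
      case True
      then have "u = w" unfolding u_def by simp
      then have "Jgam g T u w \<le> w powr (g+1) / (g+1) / w\<^sup>2" using UB1[of g w T w] assms True by simp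
      also have "\<dots> = 1/2" using assms by (simp add: powr_numeral)
      finally show ?thesis .
    next
      case False
      then have "u = T" unfolding u_def by simp
      then show ?thesis using J_refl by simp
    qed
    have hi: "Jgam g T S w \<le> Q" using split j1 j2 Q by linarith
    have l1: "L / 2 \<le> Jgam g u S w" unfolding L_def assms(1) by (rule LB4) (use up assms in auto)
    have l2: "Jgam g u S w \<le> Jgam g T S w" by (rule J_mono) (use up assms int in auto)
    have l3: "1 / (4*K) \<le> Jgam g T S w"
    proof -
      have "S powr (g+1) / (4 * K * (max S w)\<^sup>2) = 1 / (4*K)"
        unfolding mS S2 using assms by simp
      then show ?thesis using L0' by simp
    qed
    define e where "e = 1 / (8*K)"
    have e4: "1/(4*K) = 2*e" unfolding e_def by simp
    have eL: "2 * (e * L) \<le> L / 2"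
    proof -
      have "e \<le> 1/4" unfolding e_def using K1 by (simp add: divide_le_eq)
      then have "e * L \<le> 1/4 * L" using Lnn by (intro mult_right_mono) auto
      then show ?thesis by simp
    qed
    have "Q / (8*K) = e + e * L" unfolding Q e_def by (simp add: add_divide_distrib)
    then have lo: "Q / (8*K) \<le> Jgam g T S w" using l1 l2 l3 e4 eL by linarith
    show ?thesis using lo hi by simp
  qed
  then show ?thesis unfolding Q_def K_def by simp
qed

lemma neg_frac: "(a - b)/(g - 1) = (b - a)/(1 - (g::real))"
  by (metis minus_divide_divide minus_diff_eq)

lemma dd: "a / (b * c) = a / c / (b::real)"
  by (simp add: divide_divide_eq_left mult.commute)

lemma div_swap: "a / b / c = a / c / (b::real)"
  by (simp add: divide_divide_eq_left mult.commute)

lemma SMALL_a3: fixes g S T w :: real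
  assumes "-1 < g" "g < 1" "0 < S" "0 \<le> T" "T \<le> S/2" "0 < w"
  shows "S powr (g+1) / (max S w)\<^sup>2 * (max T w / max S w) powr (g - 1) / (8 * (2 powr \<bar>g\<bar>)\<^sup>2) \<le> Jgam g T S w \<and>
    Jgam g T S w \<le> (1/(1-g) + 1/(g+1)) * (S powr (g+1) / (max S w)\<^sup>2 * (max T w / max S w) powr (g - 1))"
proof -
  define K where "K = 2 powr \<bar>g\<bar>"
  define C where "C = 1/(1-g) + 1/(g+1)"
  define Q where "Q = S powr (g+1) / (max S w)\<^sup>2 * (max T w / max S w) powr (g - 1)"
  have K1: "1 \<le> K" unfolding K_def by (rule K_ge1)
  have Cp: "1/(g+1) \<le> C" "1/(1-g) \<le> C" unfolding C_def using assms by auto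
  have Qp: "0 \<le> Q" unfolding Q_def by simp
  have L0': "S powr (g+1) / (4 * K * (max S w)\<^sup>2) \<le> Jgam g T S w"
    unfolding K_def by (rule L0) (use assms in auto)
  have int: "fg g w integrable_on {T..S}" by (rule f_int) (use assms in auto)
  have KK: "4*K \<le> 8*K\<^sup>2" using K1 by (simp add: power2_eq_square)
  have "Q / (8*K\<^sup>2) \<le> Jgam g T S w \<and> Jgam g T S w \<le> C * Q"
  proof (cases "S \<le> w")
    case True
    have mx: "max T w = w" "max S w = w" using True assms by auto
    have Q: "Q = S powr (g+1) / w\<^sup>2" unfolding Q_def mx using assms by simp
    have "Q / (8*K\<^sup>2) \<le> Q / (4*K)" using KK K1 Qp by (intro divide_left_mono) auto
    also have "Q / (4*K) = S powr (g+1) / (4 * K * (max S w)\<^sup>2)" unfolding Q mx by simp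
    finally have lo: "Q / (8*K\<^sup>2) \<le> Jgam g T S w" using L0' by linarith
    have "Jgam g T S w \<le> S powr (g+1) / (g+1) / w\<^sup>2" by (rule UB1) (use assms True in auto)
    also have "\<dots> = 1/(g+1) * Q" unfolding Q by simp
    also have "\<dots> \<le> C * Q" using Cp Qp by (intro mult_right_mono) auto
    finally show ?thesis using lo by simp
  next
    case False
    define u where "u = max T w"
    have up: "0 < u" "w \<le> u" "u \<le> S" "T \<le> u" using False assms unfolding u_def by auto
    have mS: "max S w = S" using False by simp
    have Q: "Q = u powr (g-1)"
    proof -
      have "Q = S powr (g-1) * (u powr (g-1) / S powr (g-1))"
        unfolding Q_def mS u_def[symmetric] pq1[OF assms(3)] powr_divide by simp
      then show ?thesis using assms by simp
    qed
    have split: "Jgam g T S w = Jgam g T u w + Jgam g u S w" by (rule J_add) (use up int in auto)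
    have j2: "Jgam g u S w \<le> u powr (g-1) / (1-g)"
    proof -
      have "Jgam g u S w \<le> (S powr (g-1) - u powr (g-1)) / (g-1)" by (rule UB4) (use up assms in auto)
      also have "\<dots> = (u powr (g-1) - S powr (g-1)) / (1-g)"
        by (rule neg_frac)
      also have "\<dots> \<le> u powr (g-1) / (1-g)" using assms by (intro divide_right_mono) auto
      finally show ?thesis .
    qed
    have j1: "Jgam g T u w \<le> u powr (g-1) / (g+1)"
    proof (cases "T < w")
      case True
      then have uw: "u = w" unfolding u_def by simp
      have "Jgam g T u w \<le> w powr (g+1) / (g+1) / w\<^sup>2" unfolding uw by (rule UB1) (use assms True in auto)
      also have "\<dots> = u powr (g-1) / (g+1)" unfolding uw div_swap[of _ "g+1"] pq1[OF assms(6), of g] ..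
      finally show ?thesis .
    next
      case False
      then have "u = T" unfolding u_def by simp
      then show ?thesis using J_refl assms by simp
    qed
    have "C * Q = u powr (g-1) / (1-g) + u powr (g-1) / (g+1)" unfolding C_def Q by (simp add: algebra_simps)
    then have hi: "Jgam g T S w \<le> C * Q" using split j1 j2 by linarith
    have lo: "Q / (8*K\<^sup>2) \<le> Jgam g T S w"
    proof (cases "2*u \<le> S")
      case True
      have "u powr (g+1) / (5 * K\<^sup>2 * (max u w)\<^sup>2) \<le> Jgam g u S w"
        unfolding K_def by (rule L1) (use up assms True in auto)
      moreover have "max u w = u" using up by simp
      moreover have "u powr (g+1) / (5 * K\<^sup>2 * u\<^sup>2) = Q / (5 * K\<^sup>2)"
        unfolding Q dd pq1[OF up(1), of g] ..
      moreover have "Jgam g u S w \<le> Jgam g T S w" by (rule J_mono) (use up assms int in auto)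
      moreover have "Q / (8*K\<^sup>2) \<le> Q / (5*K\<^sup>2)" using K1 Qp by (intro divide_left_mono) auto
      ultimately show ?thesis by simp
    next
      case False
      have a: "S powr (g+1) / (4 * K * (max S w)\<^sup>2) = S powr (g-1) / (4*K)"
        unfolding mS dd pq1[OF assms(3), of g] ..
      have b: "(2*u) powr (g-1) \<le> S powr (g-1)" by (rule powr_mono2') (use assms False in auto)
      have c: "1/(2*K) \<le> 2 powr (g-1)"
      proof -
        have "2 powr (g-1) = 2 powr g / 2" by (simp add: powr_diff)
        moreover have "1/K \<le> 2 powr g" unfolding K_def by (rule two_powr_ge)
        ultimately show ?thesis by simp
      qed
      have "Q / (8*K\<^sup>2) = (1/(2*K) * u powr (g-1)) / (4*K)" unfolding Q by (simp add: power2_eq_square)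
      also have "\<dots> \<le> (2 powr (g-1) * u powr (g-1)) / (4*K)"
        using c K1 by (intro divide_right_mono mult_right_mono) auto
      also have "\<dots> = (2*u) powr (g-1) / (4*K)" using up by (simp add: powr_mult)
      also have "\<dots> \<le> S powr (g-1) / (4*K)" using b K1 by (intro divide_right_mono) auto
      finally show ?thesis using a L0' by linarith
    qed
    show ?thesis using lo hi by simp
  qed
  then show ?thesis unfolding Q_def K_def C_def by simp
qed

lemma neg_frac_gen: "(a - b)/c = (b - a)/(-(c::real))"
  by (metis minus_divide_divide minus_diff_eq)

lemma SMALL_b1: fixes g S T w :: real
  assumes "g < -1" "0 < T" "2 * T \<le> S" "0 < w"
  shows "T powr (g+1) / (max T w)\<^sup>2 / (5 * (2 powr \<bar>g\<bar>)\<^sup>2) \<le> Jgam g T S w \<and>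
    Jgam g T S w \<le> (1/(1-g) + 1/(-(g+1))) * (T powr (g+1) / (max T w)\<^sup>2)"
proof
  show "T powr (g+1) / (max T w)\<^sup>2 / (5 * (2 powr \<bar>g\<bar>)\<^sup>2) \<le> Jgam g T S w"
    using L1[of w T S g] assms unfolding dd by simp
  define Q where "Q = T powr (g+1) / (max T w)\<^sup>2"
  define C where "C = 1/(1-g) + 1/(-(g+1))"
  have Qp: "0 \<le> Q" unfolding Q_def by simp
  have c1: "1/(1-g) * Q \<le> C * Q" unfolding C_def using assms Qp by (intro mult_right_mono) auto
  have c2: "1/(-(g+1)) * Q \<le> C * Q" unfolding C_def using assms Qp by (intro mult_right_mono) auto
  have "Jgam g T S w \<le> C * Q"
  proof (cases "w \<le> T")
    case True
    then have "Q = T powr (g-1)" unfolding Q_def using pq1 assms by simp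
    have "Jgam g T S w \<le> (S powr (g-1) - T powr (g-1)) / (g-1)" by (rule UB4) (use assms in auto)
    also have "\<dots> = (T powr (g-1) - S powr (g-1)) / (1-g)" by (rule neg_frac)
    also have "\<dots> \<le> T powr (g-1) / (1-g)" using assms by (intro divide_right_mono) auto
    also have "\<dots> = 1/(1-g) * Q" using \<open>Q = T powr (g-1)\<close> by simp
    finally show ?thesis using c1 by linarith
  next
    case False
    then have Qw: "Q = T powr (g+1) / w\<^sup>2" unfolding Q_def by simp
    have "Jgam g T S w \<le> (S powr (g+1) - T powr (g+1)) / (g+1) / w\<^sup>2" by (rule UB3) (use assms in auto)
    also have "\<dots> = (T powr (g+1) - S powr (g+1)) / (-(g+1)) / w\<^sup>2" unfolding neg_frac_gen[of _ _ "g+1"] ..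
    also have "\<dots> \<le> T powr (g+1) / (-(g+1)) / w\<^sup>2" using assms by (intro divide_right_mono) auto
    also have "\<dots> = 1/(-(g+1)) * Q" unfolding Qw by simp
    finally show ?thesis using c2 by linarith
  qed
  then show "Jgam g T S w \<le> (1/(1-g) + 1/(-(g+1))) * (T powr (g+1) / (max T w)\<^sup>2)"
    unfolding Q_def C_def .
qed

lemma powr_m2: "0 < (T::real) \<Longrightarrow> T powr (-1 - 1) = 1 / T\<^sup>2"
  by (simp add: powr_minus powr_numeral divide_inverse)

lemma lin_add: "(J::real) = a + b \<Longrightarrow> a \<le> p \<Longrightarrow> b \<le> q \<Longrightarrow> p + q \<le> Q \<Longrightarrow> J \<le> Q"
  by linarith

lemma SMALL_b2: fixes g S T w :: real
  assumes "g = -1" "0 < T" "2 * T \<le> S" "0 < w"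
  shows "T powr (g+1) / (max T w)\<^sup>2 * (1 + logp (min S w / T)) / (10 * (2 powr \<bar>g\<bar>)\<^sup>2) \<le> Jgam g T S w \<and>
    Jgam g T S w \<le> 1 * (T powr (g+1) / (max T w)\<^sup>2 * (1 + logp (min S w / T)))"
proof -
  define K where "K = 2 powr \<bar>g\<bar>"
  define Q where "Q = T powr (g+1) / (max T w)\<^sup>2 * (1 + logp (min S w / T))"
  have K1: "1 \<le> K" unfolding K_def by (rule K_ge1)
  have T0: "T powr (g+1) = 1" using assms by simp
  have L1': "T powr (g+1) / (5 * K\<^sup>2 * (max T w)\<^sup>2) \<le> Jgam g T S w"
    unfolding K_def by (rule L1) (use assms in auto)
  have int: "fg g w integrable_on {T..S}" by (rule f_int) (use assms in auto)
  have "Q / (10*K\<^sup>2) \<le> Jgam g T S w \<and> Jgam g T S w \<le> Q"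
  proof (cases "w \<le> T")
    case True
    have mx: "max T w = T" using True by simp
    have "min S w / T \<le> 1" using True assms by auto
    then have "ln (min S w / T) \<le> 0" using assms by simp
    then have lp: "logp (min S w / T) = 0" unfolding logp_def by simp
    have Q: "Q = 1 / T\<^sup>2" unfolding Q_def mx lp T0 by simp
    have "Jgam g T S w \<le> (S powr (g-1) - T powr (g-1)) / (g-1)" by (rule UB4) (use assms in auto)
    also have "\<dots> = (T powr (g-1) - S powr (g-1)) / (1-g)" by (rule neg_frac)
    also have "\<dots> \<le> T powr (g-1) / (1-g)" using assms by (intro divide_right_mono) auto
    also have "\<dots> = 1 / T\<^sup>2 / 2" using assms powr_m2[OF assms(2)] by simp
    also have "\<dots> \<le> Q" unfolding Q
    proof -
      have "1 / (T\<^sup>2 * 2) \<le> 1 / T\<^sup>2" by (rule divide_left_mono) (use assms in auto)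
      then show "1 / T\<^sup>2 / 2 \<le> 1 / T\<^sup>2" by simp
    qed
    finally have hi: "Jgam g T S w \<le> Q" .
    have "Q / (10*K\<^sup>2) \<le> Q / (5*K\<^sup>2)" using K1 by (intro divide_left_mono) (auto simp: Q)
    also have "Q / (5*K\<^sup>2) = T powr (g+1) / (5 * K\<^sup>2 * (max T w)\<^sup>2)" unfolding Q mx T0 by simp
    finally show ?thesis using hi L1' by linarith
  next
    case False
    define v where "v = min S w"
    define L where "L = ln v - ln T"
    have vp: "T < v" "v \<le> w" "v \<le> S" using False assms unfolding v_def by auto
    have mx: "max T w = w" using False by simp
    have Lnn: "0 \<le> L" unfolding L_def using vp assms by simp
    have lnv: "ln (v/T) = L" unfolding L_def using vp assms by (simp add: ln_div)
    have lp: "logp (min S w / T) = L" unfolding logp_def v_def[symmetric] lnv using Lnn by simp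
    have Q: "Q = (1 + L) / w\<^sup>2" unfolding Q_def mx lp T0 by simp
    have split: "Jgam g T S w = Jgam g T v w + Jgam g v S w" by (rule J_add) (use vp int in auto)
    have j1: "Jgam g T v w \<le> L / w\<^sup>2" unfolding assms(1) L_def by (rule UB5a) (use vp assms in auto)
    have j2: "Jgam g v S w \<le> 1 / w\<^sup>2 / 2"
    proof (cases "S \<le> w")
      case True
      then have "v = S" unfolding v_def by simp
      then show ?thesis using J_refl by simp
    next
      case False
      then have vw: "v = w" unfolding v_def by simp
      have "Jgam g w S w \<le> (S powr (g-1) - w powr (g-1)) / (g-1)" by (rule UB4) (use assms False in auto)
      also have "\<dots> = (w powr (g-1) - S powr (g-1)) / (1-g)" by (rule neg_frac)
      also have "\<dots> \<le> w powr (g-1) / (1-g)" using assms by (intro divide_right_mono) auto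
      also have "\<dots> = 1 / w\<^sup>2 / 2" using assms powr_m2[OF assms(4)] by simp
      finally show ?thesis unfolding vw .
    qed
    have "Q = L / w\<^sup>2 + 1 / w\<^sup>2" unfolding Q by (simp add: add_divide_distrib)
    moreover have "1 / (w\<^sup>2 * 2) \<le> 1 / w\<^sup>2" by (rule divide_left_mono) (use assms in auto)
    then have "L / w\<^sup>2 + 1 / w\<^sup>2 / 2 \<le> L / w\<^sup>2 + 1 / w\<^sup>2" by simp
    ultimately have hi: "Jgam g T S w \<le> Q" using lin_add[OF split j1 j2] by simp
    have l1: "L / (2 * w\<^sup>2) \<le> Jgam g T v w" unfolding assms(1) L_def by (rule LB3) (use vp assms in auto)
    have l2: "Jgam g T v w \<le> Jgam g T S w" by (rule J_mono) (use vp assms int in auto)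
    define e where "e = 1 / (10 * K\<^sup>2 * w\<^sup>2)"
    have l3: "2 * e \<le> Jgam g T S w"
    proof -
      have "2 * e = T powr (g+1) / (5 * K\<^sup>2 * (max T w)\<^sup>2)" unfolding e_def mx T0 by simp
      then show ?thesis using L1' by simp
    qed
    have eL: "2 * (e * L) \<le> L / (2 * w\<^sup>2)"
    proof -
      have KK: "1 \<le> K*K" using mult_mono[OF K1 K1] K1 by simp
      have "2 * w\<^sup>2 \<le> 5 * K\<^sup>2 * w\<^sup>2"
      proof (rule mult_right_mono)
        show "2 \<le> 5 * K\<^sup>2" unfolding power2_eq_square using KK by linarith
      qed simp
      then have "2 * e \<le> 1 / (2 * w\<^sup>2)" unfolding e_def using assms by (simp add: frac_le)
      then have "2 * e * L \<le> 1 / (2 * w\<^sup>2) * L" using Lnn by (intro mult_right_mono) auto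
      then show ?thesis by simp
    qed
    have "Q / (10*K\<^sup>2) = e + e * L" unfolding Q e_def by (simp add: add_divide_distrib mult_ac)
    then have lo: "Q / (10*K\<^sup>2) \<le> Jgam g T S w" using l1 l2 l3 eL by linarith
    show ?thesis using lo hi by simp
  qed
  then show ?thesis unfolding Q_def K_def by simp
qed

lemma weaken2: fixes R J c C2 C' :: real
  assumes "0 \<le> R" "0 < c" "c \<le> C'" "C2 \<le> C'" "R/c \<le> J" "J \<le> C2*R"
  shows "R/C' \<le> J \<and> J \<le> C'*R"
proof
  have "R/C' \<le> R/c" using assms by (intro divide_left_mono) auto
  then show "R/C' \<le> J" using assms by linarith
  have "C2*R \<le> C'*R" using assms by (intro mult_right_mono) auto
  then show "J \<le> C'*R" using assms by linarith
qed

lemma rhs_a_nonneg: assumes "0 \<le> T" "T \<le> S" "0 < w" shows "0 \<le> rhs_a g T S w"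
proof -
  have f: "0 \<le> (if g > 1 then 1 else if g = 1 then 1 + logp (S / max T w)
      else (max T w / max S w) powr (g - 1))"
    unfolding logp_def by auto
  have "0 \<le> (S - T) / S" using assms by simp
  moreover have "0 \<le> S powr (g + 1) / (max S w)\<^sup>2" by simp
  ultimately show ?thesis unfolding rhs_a_def by (intro mult_nonneg_nonneg f) auto
qed

lemma rhs_b_nonneg: assumes "0 \<le> T" "T \<le> S" "0 < w" shows "0 \<le> rhs_b g T S w"
proof -
  have f: "0 \<le> (if g = -1 then 1 + logp (min S w / T) else 1)"
    unfolding logp_def by auto
  have "0 \<le> (S - T) / S" using assms by simp
  moreover have "0 \<le> T powr (g + 1) / (max T w)\<^sup>2" by simp
  ultimately show ?thesis unfolding rhs_b_def by (intro mult_nonneg_nonneg f) auto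
qed

theorem lemma3p1:
  fixes \<gamma> M :: real
  assumes "M > 0"
  shows "(\<gamma> > -1 \<longrightarrow> (\<exists>C>0. \<forall>T S w. 0 \<le> T \<and> T \<le> S \<and> 0 < w \<and> w \<le> M \<longrightarrow>
            rhs_a \<gamma> T S w / C \<le> Jgam \<gamma> T S w \<and> Jgam \<gamma> T S w \<le> C * rhs_a \<gamma> T S w))
       \<and> (\<gamma> \<le> -1 \<longrightarrow> (\<exists>C>0. \<forall>T S w. 0 < T \<and> T \<le> S \<and> 0 < w \<and> w \<le> M \<longrightarrow>
            rhs_b \<gamma> T S w / C \<le> Jgam \<gamma> T S w \<and> Jgam \<gamma> T S w \<le> C * rhs_b \<gamma> T S w))"
proof (intro conjI impI)
  define K where "K = 2 powr \<bar>\<gamma>\<bar>"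
  have K1: "1 \<le> K" unfolding K_def by (rule K_ge1)
  have KK: "1 \<le> K\<^sup>2" using mult_mono[OF K1 K1] K1 by (simp add: power2_eq_square)
  {
    assume g: "\<gamma> > -1"
    define Cb where "Cb = 4 * K * (2 * (2 + 2 powr \<bar>\<gamma> - 1\<bar>))"
    define C1 where "C1 = 1/(\<gamma>+1) + 1/(\<gamma>-1)"
    define C3 where "C3 = 1/(1-\<gamma>) + 1/(\<gamma>+1)"
    define Cs where "Cs = (if \<gamma> > 1 then max (4*K) (2*C1) else if \<gamma> = 1 then max (8*K) 2
       else max (8*K\<^sup>2) (2*C3))"
    define C where "C = max Cb Cs"
    have Cbp: "Cb > 0" unfolding Cb_def using K1 by (simp add: add_pos_pos)
    have Cp: "C > 0" unfolding C_def using Cbp by simp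
    show "\<exists>C>0. \<forall>T S w. 0 \<le> T \<and> T \<le> S \<and> 0 < w \<and> w \<le> M \<longrightarrow>
            rhs_a \<gamma> T S w / C \<le> Jgam \<gamma> T S w \<and> Jgam \<gamma> T S w \<le> C * rhs_a \<gamma> T S w"
    proof (rule exI[of _ C], rule conjI[OF Cp], intro allI impI)
      fix T S w :: real assume a: "0 \<le> T \<and> T \<le> S \<and> 0 < w \<and> w \<le> M"
      then have T0: "0 \<le> T" and TS: "T \<le> S" and w0: "0 < w" by auto
      have Rn: "0 \<le> rhs_a \<gamma> T S w" by (rule rhs_a_nonneg) (use a in auto)
      show "rhs_a \<gamma> T S w / C \<le> Jgam \<gamma> T S w \<and> Jgam \<gamma> T S w \<le> C * rhs_a \<gamma> T S w"
      proof (cases "S = 0")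
        case True
        then have "T = 0" using a by auto
        then show ?thesis using True by (simp add: rhs_a_def J_refl)
      next
        case False
        then have S0: "0 < S" using a by auto
        show ?thesis
        proof (cases "S/2 \<le> T")
          case True
          have bg: "rhs_a \<gamma> T S w / Cb \<le> Jgam \<gamma> T S w \<and> Jgam \<gamma> T S w \<le> Cb * rhs_a \<gamma> T S w"
            unfolding Cb_def K_def by (rule BIG_a) (use S0 True a in auto)
          show ?thesis by (rule weaken2[OF Rn Cbp _ _ conjunct1[OF bg] conjunct2[OF bg]]) (auto simp: C_def)
        next
          case False
          then have TS2: "T \<le> S/2" by simp
          show ?thesis
          proof (cases "\<gamma> > 1")
            case g1: True
            define Q where "Q = S powr (\<gamma>+1) / (max S w)\<^sup>2"
            have b: "Q / (4 * K) \<le> Jgam \<gamma> T S w \<and> Jgam \<gamma> T S w \<le> C1 * Q"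
              unfolding Q_def K_def C1_def by (rule SMALL_a1) (use g1 S0 TS2 a in auto)
            have R: "rhs_a \<gamma> T S w = (S-T)/S * Q" unfolding rhs_a_def Q_def using g1 by simp
            have C1p: "0 < C1" unfolding C1_def using g1 by (simp add: add_pos_pos)
            have sc: "rhs_a \<gamma> T S w / (4*K) \<le> Jgam \<gamma> T S w \<and> Jgam \<gamma> T S w \<le> 2 * C1 * rhs_a \<gamma> T S w"
              by (rule small_conv[OF S0 T0 TS2 _ _ _ _ C1p R]) (use b K1 in \<open>auto simp: Q_def\<close>)
            show ?thesis
              by (rule weaken2[OF Rn _ _ _ conjunct1[OF sc] conjunct2[OF sc]])
                 (use K1 g1 in \<open>auto simp: C_def Cs_def\<close>)
          next
            case ng1: False
            show ?thesis
            proof (cases "\<gamma> = 1")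
              case g1: True
              define Q where "Q = S powr (\<gamma>+1) / (max S w)\<^sup>2 * (1 + logp (S / max T w))"
              have b: "Q / (8 * K) \<le> Jgam \<gamma> T S w \<and> Jgam \<gamma> T S w \<le> 1 * Q"
                unfolding Q_def K_def by (rule SMALL_a2) (use g1 S0 TS2 a in auto)
              have R: "rhs_a \<gamma> T S w = (S-T)/S * Q" unfolding rhs_a_def Q_def using g1 by simp
              have Qn: "0 \<le> Q" unfolding Q_def logp_def by simp
              have sc: "rhs_a \<gamma> T S w / (8*K) \<le> Jgam \<gamma> T S w \<and> Jgam \<gamma> T S w \<le> 2 * 1 * rhs_a \<gamma> T S w"
                by (rule small_conv[OF S0 T0 TS2 Qn _ _ _ _ R]) (use b K1 in auto)
              show ?thesis
                by (rule weaken2[OF Rn _ _ _ conjunct1[OF sc] conjunct2[OF sc]])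
                   (use K1 g1 in \<open>auto simp: C_def Cs_def\<close>)
            next
              case ng2: False
              then have g3: "\<gamma> < 1" using ng1 by simp
              define Q where "Q = S powr (\<gamma>+1) / (max S w)\<^sup>2 * (max T w / max S w) powr (\<gamma> - 1)"
              have b: "Q / (8 * K\<^sup>2) \<le> Jgam \<gamma> T S w \<and> Jgam \<gamma> T S w \<le> C3 * Q"
                unfolding Q_def K_def C3_def by (rule SMALL_a3) (use g g3 S0 TS2 a in auto)
              have R: "rhs_a \<gamma> T S w = (S-T)/S * Q" unfolding rhs_a_def Q_def using ng1 ng2 by simp
              have Qn: "0 \<le> Q" unfolding Q_def by simp
              have C3p: "0 < C3" unfolding C3_def using g g3 by (simp add: add_pos_pos)
              have sc: "rhs_a \<gamma> T S w / (8*K\<^sup>2) \<le> Jgam \<gamma> T S w \<and> Jgam \<gamma> T S w \<le> 2 * C3 * rhs_a \<gamma> T S w"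
                by (rule small_conv[OF S0 T0 TS2 Qn _ _ _ C3p R]) (use b KK in auto)
              show ?thesis
                by (rule weaken2[OF Rn _ _ _ conjunct1[OF sc] conjunct2[OF sc]])
                   (use KK ng1 ng2 in \<open>auto simp: C_def Cs_def\<close>)
            qed
          qed
        qed
      qed
    qed
  }
  {
    assume g: "\<gamma> \<le> -1"
    define Cb where "Cb = 4 * K * (16 * 2 powr \<bar>\<gamma> + 1\<bar>)"
    define C4 where "C4 = 1/(1-\<gamma>) + 1/(-(\<gamma>+1))"
    define Cs where "Cs = (if \<gamma> < -1 then max (5*K\<^sup>2) (2*C4) else max (10*K\<^sup>2) 2)"
    define C where "C = max Cb Cs"
    have Cbp: "Cb > 0" unfolding Cb_def using K1 by simp
    have Cp: "C > 0" unfolding C_def using Cbp by simp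
    show "\<exists>C>0. \<forall>T S w. 0 < T \<and> T \<le> S \<and> 0 < w \<and> w \<le> M \<longrightarrow>
            rhs_b \<gamma> T S w / C \<le> Jgam \<gamma> T S w \<and> Jgam \<gamma> T S w \<le> C * rhs_b \<gamma> T S w"
    proof (rule exI[of _ C], rule conjI[OF Cp], intro allI impI)
      fix T S w :: real assume a: "0 < T \<and> T \<le> S \<and> 0 < w \<and> w \<le> M"
      then have T0: "0 < T" and TS: "T \<le> S" and w0: "0 < w" by auto
      have S0: "0 < S" using a by auto
      have Rn: "0 \<le> rhs_b \<gamma> T S w" by (rule rhs_b_nonneg) (use a in auto)
      show "rhs_b \<gamma> T S w / C \<le> Jgam \<gamma> T S w \<and> Jgam \<gamma> T S w \<le> C * rhs_b \<gamma> T S w"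
      proof (cases "S/2 \<le> T")
        case True
        have bg: "rhs_b \<gamma> T S w / Cb \<le> Jgam \<gamma> T S w \<and> Jgam \<gamma> T S w \<le> Cb * rhs_b \<gamma> T S w"
          unfolding Cb_def K_def by (rule BIG_b) (use S0 True a in auto)
        show ?thesis by (rule weaken2[OF Rn Cbp _ _ conjunct1[OF bg] conjunct2[OF bg]]) (auto simp: C_def)
      next
        case False
        then have TS2: "T \<le> S/2" and T2: "2 * T \<le> S" by auto
        show ?thesis
        proof (cases "\<gamma> < -1")
          case g1: True
          define Q where "Q = T powr (\<gamma>+1) / (max T w)\<^sup>2"
          have b: "Q / (5 * K\<^sup>2) \<le> Jgam \<gamma> T S w \<and> Jgam \<gamma> T S w \<le> C4 * Q"
            unfolding Q_def K_def C4_def by (rule SMALL_b1) (use g1 T2 a in auto)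
          have R: "rhs_b \<gamma> T S w = (S-T)/S * Q" unfolding rhs_b_def Q_def using g1 by simp
          have C4p: "0 < C4" unfolding C4_def using g1 by (simp add: add_pos_pos)
          have Qn: "0 \<le> Q" unfolding Q_def by simp
          have sc: "rhs_b \<gamma> T S w / (5*K\<^sup>2) \<le> Jgam \<gamma> T S w \<and> Jgam \<gamma> T S w \<le> 2 * C4 * rhs_b \<gamma> T S w"
            by (rule small_conv[OF S0 _ TS2 Qn _ _ _ C4p R]) (use b KK T0 in auto)
          show ?thesis
            by (rule weaken2[OF Rn _ _ _ conjunct1[OF sc] conjunct2[OF sc]])
               (use KK g1 in \<open>auto simp: C_def Cs_def\<close>)
        next
          case ng1: False
          then have g1: "\<gamma> = -1" using g by simp
          define Q where "Q = T powr (\<gamma>+1) / (max T w)\<^sup>2 * (1 + logp (min S w / T))"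
          have b: "Q / (10 * K\<^sup>2) \<le> Jgam \<gamma> T S w \<and> Jgam \<gamma> T S w \<le> 1 * Q"
            unfolding Q_def K_def by (rule SMALL_b2) (use g1 T2 a in auto)
          have R: "rhs_b \<gamma> T S w = (S-T)/S * Q" unfolding rhs_b_def Q_def using g1 by simp
          have Qn: "0 \<le> Q" unfolding Q_def logp_def by simp
          have sc: "rhs_b \<gamma> T S w / (10*K\<^sup>2) \<le> Jgam \<gamma> T S w \<and> Jgam \<gamma> T S w \<le> 2 * 1 * rhs_b \<gamma> T S w"
            by (rule small_conv[OF S0 _ TS2 Qn _ _ _ _ R]) (use b KK T0 in auto)
          show ?thesis
            by (rule weaken2[OF Rn _ _ _ conjunct1[OF sc] conjunct2[OF sc]])
               (use KK g1 in \<open>auto simp: C_def Cs_def\<close>)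
        qed
      qed
    qed
  }
qed

end
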